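(* Let $P_1,\dots,P_N\in\mathbb{R}^2$ be fixed regular points and let $T_0$ be a full Steiner topology on them. Let $S$ and $S'$ be two adjacent Steiner points of $T_0$, where the neighbors of $S$ are $\{A,B,S'\}$ and the neighbors of $S'$ are $\{C,D,S\}$ (each of $A,B,C,D$ may be a regular or a Steiner point). Let $T_1$ and $T_2$ be the two other topologies obtained from $T_0$ by reorganizing the neighborhood of $S,S'$: in $T_1$ the neighbors of $S$ are $\{B,C,S'\}$ and those of $S'$ are $\{A,D,S\}$; in $T_2$ the neighbors of $S$ are $\{A,C,S'\}$ and those of $S'$ are $\{B,D,S\}$; all other adjacencies are unchanged. Consider a minimal tree for $T_0$, i.e. a placement of the Steiner points minimizing the total Euclidean edge length among all placements realizing $T_0$ (coincident points allowed), and suppose that in this minimal tree the segments $[AB]$ and $[CD]$ intersect. Then: (1) $S$ and $S'$ have the same coordinates; (2) the length $L_{T_0}$ of the minimal tree for $T_0$ satisfies $L_{T_0}\ge L_{T_i}$ for $i=1,2$, where $L_{T_i}$ is the minimal length of a tree with topology $T_i$; (3) in this minimal tree, $|AS|+|BS|+|CS'|+|DS'|+|SS'| = |AB|+|CD|$.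
   Context: A Steiner tree on $N$ given (regular) points is a tree in the plane whose vertex set consists of the regular points together with additional vertices called Steiner points, each Steiner point having degree exactly 3; its length is the sum of the Euclidean lengths of its edges. The topology of a Steiner tree is its combinatorial structure (which vertices are adjacent). A full topology is one with the maximal number $N-2$ of Steiner points. For a fixed topology, the regular points are fixed and the Steiner point positions are variables in $\mathbb{R}^2$; positions may coincide with each other or with regular points (degenerate trees, with zero-length edges). *)

theory Defs
  imports "HOL-Analysis.Analysis"
begin

datatype vtx = Reg nat | Stn nat

definition vertices :: "nat \<Rightarrow> vtx set" where
  "vertices N = Reg ` {..<N} \<union> Stn ` {..<N - 2}"

text \<open>A topology is a symmetric adjacency relation on the vertices.\<close>
definition neighbors :: "(vtx \<Rightarrow> vtx \<Rightarrow> bool) \<Rightarrow> vtx \<Rightarrow> vtx set" where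
  "neighbors adj v = {w. adj v w}"

definition is_graph_on :: "vtx set \<Rightarrow> (vtx \<Rightarrow> vtx \<Rightarrow> bool) \<Rightarrow> bool" where
  "is_graph_on V adj \<longleftrightarrow> (\<forall>u v. adj u v \<longrightarrow> u \<in> V \<and> v \<in> V \<and> u \<noteq> v \<and> adj v u)"

definition connected_on :: "vtx set \<Rightarrow> (vtx \<Rightarrow> vtx \<Rightarrow> bool) \<Rightarrow> bool" where
  "connected_on V adj \<longleftrightarrow> (\<forall>u\<in>V. \<forall>v\<in>V. adj\<^sup>*\<^sup>* u v)"

definition has_cycle :: "(vtx \<Rightarrow> vtx \<Rightarrow> bool) \<Rightarrow> bool" where
  "has_cycle adj \<longleftrightarrow> (\<exists>cs. length cs \<ge> 3 \<and> distinct cs \<and>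
      (\<forall>i. Suc i < length cs \<longrightarrow> adj (cs ! i) (cs ! Suc i)) \<and> adj (last cs) (hd cs))"

definition is_tree_on :: "vtx set \<Rightarrow> (vtx \<Rightarrow> vtx \<Rightarrow> bool) \<Rightarrow> bool" where
  "is_tree_on V adj \<longleftrightarrow> is_graph_on V adj \<and> connected_on V adj \<and> \<not> has_cycle adj"

definition full_steiner_topology :: "nat \<Rightarrow> (vtx \<Rightarrow> vtx \<Rightarrow> bool) \<Rightarrow> bool" where
  "full_steiner_topology N adj \<longleftrightarrow> is_tree_on (vertices N) adj \<and>
     (\<forall>j < N - 2. card (neighbors adj (Stn j)) = 3)"

fun pos :: "(nat \<Rightarrow> real^2) \<Rightarrow> (nat \<Rightarrow> real^2) \<Rightarrow> vtx \<Rightarrow> real^2" where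
  "pos P s (Reg i) = P i"
| "pos P s (Stn j) = s j"

text \<open>Length of the tree: sum over (unordered) edges of Euclidean lengths;
  each edge appears twice among ordered adjacent pairs.\<close>
definition tree_length :: "(nat \<Rightarrow> real^2) \<Rightarrow> (vtx \<Rightarrow> vtx \<Rightarrow> bool) \<Rightarrow> (nat \<Rightarrow> real^2) \<Rightarrow> real" where
  "tree_length P adj s = (\<Sum>(u,v)\<in>{(u,v). adj u v}. dist (pos P s u) (pos P s v)) / 2"

definition min_length :: "(nat \<Rightarrow> real^2) \<Rightarrow> (vtx \<Rightarrow> vtx \<Rightarrow> bool) \<Rightarrow> real" where
  "min_length P adj = Inf (range (tree_length P adj))"

definition is_minimal_tree :: "(nat \<Rightarrow> real^2) \<Rightarrow> (vtx \<Rightarrow> vtx \<Rightarrow> bool) \<Rightarrow> (nat \<Rightarrow> real^2) \<Rightarrow> bool" where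
  "is_minimal_tree P adj s \<longleftrightarrow> (\<forall>s'. tree_length P adj s \<le> tree_length P adj s')"

end

theory Submission
  imports Defs
begin

lemma tl_split:
  assumes fin: "finite {(u,v). adj u v}"
  shows "tree_length P adj s =
    ((\<Sum>(u,v)\<in>{(u,v). adj u v \<and> u \<notin> K \<and> v \<notin> K}. dist (pos P s u) (pos P s v))
   + (\<Sum>(u,v)\<in>{(u,v). adj u v \<and> (u \<in> K \<or> v \<in> K)}. dist (pos P s u) (pos P s v))) / 2"
proof -
  have eq: "{(u,v). adj u v} = {(u,v). adj u v \<and> u \<notin> K \<and> v \<notin> K} \<union> {(u,v). adj u v \<and> (u \<in> K \<or> v \<in> K)}"
    by auto
  have f1: "finite {(u,v). adj u v \<and> u \<notin> K \<and> v \<notin> K}"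
    by (rule finite_subset[OF _ fin]) auto
  have f2: "finite {(u,v). adj u v \<and> (u \<in> K \<or> v \<in> K)}"
    by (rule finite_subset[OF _ fin]) auto
  show ?thesis unfolding tree_length_def
    by (subst eq, subst sum.union_disjoint[OF f1 f2]) auto
qed

lemma tl_nonneg: "tree_length P adj s \<ge> 0"
  unfolding tree_length_def by (rule divide_nonneg_pos, rule sum_nonneg) auto

lemma tri_cycle:
  assumes "adj a b" "adj b c" "adj c a" "distinct [a,b,c]"
  shows "has_cycle adj"
  unfolding has_cycle_def
  apply (rule exI[of _ "[a,b,c]"])
  using assms by (auto simp: less_Suc_eq nth_Cons')

lemma nb_set: fixes T0 :: "vtx \<Rightarrow> vtx \<Rightarrow> bool" and S S' A B C D :: vtx
  assumes nS: "\<And>v. T0 S v \<longleftrightarrow> v \<in> {A,B,S'}" and nS': "\<And>v. T0 S' v \<longleftrightarrow> v \<in> {C,D,S}"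
   and nSr: "\<And>v. T0 v S \<longleftrightarrow> v \<in> {A,B,S'}" and nS'r: "\<And>v. T0 v S' \<longleftrightarrow> v \<in> {C,D,S}"
  shows "{(u,v). T0 u v \<and> (u \<in> {S,S'} \<or> v \<in> {S,S'})} =
     {(S,A),(S,B),(S,S'),(A,S),(B,S),(S',S),(S',C),(S',D),(C,S'),(D,S')}"
proof (rule set_eqI)
  fix x :: "vtx \<times> vtx"
  obtain u v where x: "x = (u,v)" by (cases x)
  show "x \<in> {(u,v). T0 u v \<and> (u \<in> {S,S'} \<or> v \<in> {S,S'})} \<longleftrightarrow> x \<in> {(S,A),(S,B),(S,S'),(A,S),(B,S),(S',S),(S',C),(S',D),(C,S'),(D,S')}"
    unfolding x
  proof
    assume h: "(u,v) \<in> {(u,v). T0 u v \<and> (u \<in> {S,S'} \<or> v \<in> {S,S'})}"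
    then have t: "T0 u v" and "u = S \<or> u = S' \<or> v = S \<or> v = S'" by auto
    then consider "u = S" | "u = S'" | "v = S" | "v = S'" by blast
    then show "(u,v) \<in> {(S,A),(S,B),(S,S'),(A,S),(B,S),(S',S),(S',C),(S',D),(C,S'),(D,S')}"
    proof cases
      case 1 then show ?thesis using t nS[of v] by auto
    next
      case 2 then show ?thesis using t nS'[of v] by auto
    next
      case 3 then show ?thesis using t nSr[of u] by auto
    next
      case 4 then show ?thesis using t nS'r[of u] by auto
    qed
  next
    assume "(u,v) \<in> {(S,A),(S,B),(S,S'),(A,S),(B,S),(S',S),(S',C),(S',D),(C,S'),(D,S')}"
    then show "(u,v) \<in> {(u,v). T0 u v \<and> (u \<in> {S,S'} \<or> v \<in> {S,S'})}"
      using nS nS' nSr nS'r by auto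
  qed
qed

theorem mainTheorem1:
  fixes N :: nat and P :: "nat \<Rightarrow> real^2"
    and T0 T1 T2 :: "vtx \<Rightarrow> vtx \<Rightarrow> bool"
    and S S' A B C D :: vtx and s :: "nat \<Rightarrow> real^2"
  assumes inj: "inj_on P {..<N}"
    and top: "full_steiner_topology N T0"
    and S_stn: "S \<in> Stn ` {..<N - 2}" and S'_stn: "S' \<in> Stn ` {..<N - 2}"
    and adjSS': "T0 S S'"
    and nbS: "neighbors T0 S = {A, B, S'}"
    and nbS': "neighbors T0 S' = {C, D, S}"
    and T1_sym: "\<forall>u v. T1 u v \<longleftrightarrow> T1 v u"
    and T1_S: "neighbors T1 S = {B, C, S'}"
    and T1_S': "neighbors T1 S' = {A, D, S}"
    and T1_rest: "\<forall>u v. u \<notin> {S, S'} \<and> v \<notin> {S, S'} \<longrightarrow> (T1 u v \<longleftrightarrow> T0 u v)"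
    and T2_sym: "\<forall>u v. T2 u v \<longleftrightarrow> T2 v u"
    and T2_S: "neighbors T2 S = {A, C, S'}"
    and T2_S': "neighbors T2 S' = {B, D, S}"
    and T2_rest: "\<forall>u v. u \<notin> {S, S'} \<and> v \<notin> {S, S'} \<longrightarrow> (T2 u v \<longleftrightarrow> T0 u v)"
    and minimal: "is_minimal_tree P T0 s"
    and cross: "closed_segment (pos P s A) (pos P s B) \<inter> closed_segment (pos P s C) (pos P s D) \<noteq> {}"
  shows "pos P s S = pos P s S'
    \<and> tree_length P T0 s \<ge> min_length P T1
    \<and> tree_length P T0 s \<ge> min_length P T2
    \<and> dist (pos P s A) (pos P s S) + dist (pos P s B) (pos P s S)
      + dist (pos P s C) (pos P s S') + dist (pos P s D) (pos P s S')
      + dist (pos P s S) (pos P s S')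
      = dist (pos P s A) (pos P s B) + dist (pos P s C) (pos P s D)"
proof -
  obtain j where j: "S = Stn j" "j < N - 2" using S_stn by auto
  obtain j' where j': "S' = Stn j'" "j' < N - 2" using S'_stn by auto
  have tree: "is_tree_on (vertices N) T0" and deg: "\<forall>j < N - 2. card (neighbors T0 (Stn j)) = 3"
    using top unfolding full_steiner_topology_def by auto
  have g: "is_graph_on (vertices N) T0" and nocyc: "\<not> has_cycle T0"
    using tree unfolding is_tree_on_def by auto
  have sym0: "T0 u v \<Longrightarrow> T0 v u" for u v using g unfolding is_graph_on_def by blast
  have irr: "T0 u v \<Longrightarrow> u \<noteq> v" for u v using g unfolding is_graph_on_def by blast
  have inV: "T0 u v \<Longrightarrow> u \<in> vertices N \<and> v \<in> vertices N" for u v using g unfolding is_graph_on_def by blast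
  have nS: "T0 S v \<longleftrightarrow> v \<in> {A,B,S'}" for v using nbS unfolding neighbors_def by blast
  have nS': "T0 S' v \<longleftrightarrow> v \<in> {C,D,S}" for v using nbS' unfolding neighbors_def by blast
  have nSr: "T0 v S \<longleftrightarrow> v \<in> {A,B,S'}" for v using nS sym0 by blast
  have nS'r: "T0 v S' \<longleftrightarrow> v \<in> {C,D,S}" for v using nS' sym0 by blast
  have n1S: "T1 S v \<longleftrightarrow> v \<in> {B,C,S'}" for v using T1_S unfolding neighbors_def by blast
  have n1S': "T1 S' v \<longleftrightarrow> v \<in> {A,D,S}" for v using T1_S' unfolding neighbors_def by blast
  have n1Sr: "T1 v S \<longleftrightarrow> v \<in> {B,C,S'}" for v using n1S T1_sym by blast
  have n1S'r: "T1 v S' \<longleftrightarrow> v \<in> {A,D,S}" for v using n1S' T1_sym by blast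
  have n2S: "T2 S v \<longleftrightarrow> v \<in> {A,C,S'}" for v using T2_S unfolding neighbors_def by blast
  have n2S': "T2 S' v \<longleftrightarrow> v \<in> {B,D,S}" for v using T2_S' unfolding neighbors_def by blast
  have n2Sr: "T2 v S \<longleftrightarrow> v \<in> {A,C,S'}" for v using n2S T2_sym by blast
  have n2S'r: "T2 v S' \<longleftrightarrow> v \<in> {B,D,S}" for v using n2S' T2_sym by blast
  have c1: "card {A,B,S'} = 3" using deg j nbS by auto
  have c2: "card {C,D,S} = 3" using deg j' nbS' by auto
  have d1: "A \<noteq> B" "A \<noteq> S'" "B \<noteq> S'" using c1 by (auto simp: card_insert_if split: if_splits)
  have d2: "C \<noteq> D" "C \<noteq> S" "D \<noteq> S" using c2 by (auto simp: card_insert_if split: if_splits)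
  have SS': "S \<noteq> S'" using irr adjSS' .
  have d3: "A \<noteq> S" "B \<noteq> S" "C \<noteq> S'" "D \<noteq> S'" using irr nS nS' by auto
  have d4: "X \<noteq> Y" if "X \<in> {A,B}" "Y \<in> {C,D}" for X Y
  proof
    assume "X = Y"
    have "has_cycle T0"
      by (rule tri_cycle[of T0 X S S']) (use that \<open>X = Y\<close> nSr nS' adjSS' d1 d2 d3 SS' in auto)
    with nocyc show False by simp
  qed
  have dAC: "A \<noteq> C" "A \<noteq> D" "B \<noteq> C" "B \<noteq> D" by (rule d4; simp)+
  note ds = d1 d2 d3 dAC SS' d1[symmetric] d2[symmetric] d3[symmetric] dAC[symmetric] SS'[symmetric]
  define K where "K = {S, S'}"
  define Ou where "Ou = {(u,v). T0 u v \<and> u \<notin> K \<and> v \<notin> K}"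
  have fin0: "finite {(u,v). T0 u v}"
  proof (rule finite_subset)
    show "{(u,v). T0 u v} \<subseteq> vertices N \<times> vertices N" using inV by auto
    show "finite (vertices N \<times> vertices N)" unfolding vertices_def by auto
  qed
  have finO: "finite Ou" unfolding Ou_def by (rule finite_subset[OF _ fin0]) auto
  have I0: "{(u,v). T0 u v \<and> (u \<in> K \<or> v \<in> K)} =
     {(S,A),(S,B),(S,S'),(A,S),(B,S),(S',S),(S',C),(S',D),(C,S'),(D,S')}"
    unfolding K_def by (rule nb_set) (use nS nS' nSr nS'r in auto)
  have O1: "{(u,v). T1 u v \<and> u \<notin> K \<and> v \<notin> K} = Ou"
    unfolding Ou_def K_def using T1_rest by auto
  have O2: "{(u,v). T2 u v \<and> u \<notin> K \<and> v \<notin> K} = Ou"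
    unfolding Ou_def K_def using T2_rest by auto
  have I1: "{(u,v). T1 u v \<and> (u \<in> K \<or> v \<in> K)} =
     {(S,B),(S,C),(S,S'),(B,S),(C,S),(S',S),(S',A),(S',D),(A,S'),(D,S')}"
    unfolding K_def by (rule nb_set) (use n1S n1S' n1Sr n1S'r in auto)
  have I2: "{(u,v). T2 u v \<and> (u \<in> K \<or> v \<in> K)} =
     {(S,A),(S,C),(S,S'),(A,S),(C,S),(S',S),(S',B),(S',D),(B,S'),(D,S')}"
    unfolding K_def by (rule nb_set) (use n2S n2S' n2Sr n2S'r in auto)
  have fin1: "finite {(u,v). T1 u v}"
  proof -
    have "{(u,v). T1 u v} = {(u,v). T1 u v \<and> u \<notin> K \<and> v \<notin> K} \<union> {(u,v). T1 u v \<and> (u \<in> K \<or> v \<in> K)}" by auto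
    then show ?thesis using O1 I1 finO by simp
  qed
  have fin2: "finite {(u,v). T2 u v}"
  proof -
    have "{(u,v). T2 u v} = {(u,v). T2 u v \<and> u \<notin> K \<and> v \<notin> K} \<union> {(u,v). T2 u v \<and> (u \<in> K \<or> v \<in> K)}" by auto
    then show ?thesis using O2 I2 finO by simp
  qed
  define W where "W t = (\<Sum>(u,v)\<in>Ou. dist (pos P t u) (pos P t v)) / 2" for t
  have L0: "tree_length P T0 t = W t + (dist (pos P t A) (pos P t S) + dist (pos P t B) (pos P t S)
      + dist (pos P t C) (pos P t S') + dist (pos P t D) (pos P t S') + dist (pos P t S) (pos P t S'))" for t
    unfolding tl_split[OF fin0, of P t K] I0 Ou_def[symmetric] W_def using ds
    by (simp add: dist_commute)
  have L1: "tree_length P T1 t = W t + (dist (pos P t B) (pos P t S) + dist (pos P t C) (pos P t S)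
      + dist (pos P t A) (pos P t S') + dist (pos P t D) (pos P t S') + dist (pos P t S) (pos P t S'))" for t
    unfolding tl_split[OF fin1, of P t K] I1 O1 W_def using ds
    by (simp add: dist_commute)
  have L2: "tree_length P T2 t = W t + (dist (pos P t A) (pos P t S) + dist (pos P t C) (pos P t S)
      + dist (pos P t B) (pos P t S') + dist (pos P t D) (pos P t S') + dist (pos P t S) (pos P t S'))" for t
    unfolding tl_split[OF fin2, of P t K] I2 O2 W_def using ds
    by (simp add: dist_commute)
  obtain X where X: "X \<in> closed_segment (pos P s A) (pos P s B)" "X \<in> closed_segment (pos P s C) (pos P s D)"
    using cross by blast
  define s' where "s' = s(j := X, j' := X)"
  have same: "pos P s' u = pos P s u" if "u \<notin> K" for u
    using that j j' unfolding K_def s'_def by (cases u) auto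
  have pS: "pos P s' S = X" "pos P s' S' = X" using j j' unfolding s'_def by auto
  have WW: "W s' = W s" unfolding W_def Ou_def
    by (intro arg_cong[where f="\<lambda>x. x / 2"] sum.cong) (auto simp: same)
  have KA: "A \<notin> K" "B \<notin> K" "C \<notin> K" "D \<notin> K" unfolding K_def using ds by auto
  have eAB: "dist (pos P s A) (pos P s B) = dist (pos P s A) X + dist X (pos P s B)"
    using X(1) by (simp add: between_mem_segment[symmetric] between)
  have eCD: "dist (pos P s C) (pos P s D) = dist (pos P s C) X + dist X (pos P s D)"
    using X(2) by (simp add: between_mem_segment[symmetric] between)
  have "tree_length P T0 s \<le> tree_length P T0 s'" using minimal unfolding is_minimal_tree_def by blast
  hence le: "dist (pos P s A) (pos P s S) + dist (pos P s B) (pos P s S)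
      + dist (pos P s C) (pos P s S') + dist (pos P s D) (pos P s S') + dist (pos P s S) (pos P s S')
      \<le> dist (pos P s A) (pos P s B) + dist (pos P s C) (pos P s D)"
    unfolding L0 WW pS using KA same eAB eCD by (simp add: dist_commute)
  have t1: "dist (pos P s A) (pos P s B) \<le> dist (pos P s A) (pos P s S) + dist (pos P s B) (pos P s S)"
    by (metis dist_commute dist_triangle)
  have t2: "dist (pos P s C) (pos P s D) \<le> dist (pos P s C) (pos P s S') + dist (pos P s D) (pos P s S')"
    by (metis dist_commute dist_triangle)
  have z: "dist (pos P s S) (pos P s S') = 0" using le t1 t2 zero_le_dist[of "pos P s S" "pos P s S'"] by linarith
  hence eq: "pos P s S = pos P s S'" by simp
  have m1: "min_length P T1 \<le> tree_length P T1 s"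
    unfolding min_length_def by (rule cInf_lower) (auto intro: tl_nonneg bdd_belowI)
  have m2: "min_length P T2 \<le> tree_length P T2 s"
    unfolding min_length_def by (rule cInf_lower) (auto intro: tl_nonneg bdd_belowI)
  have "tree_length P T1 s = tree_length P T0 s" unfolding L0 L1 eq by simp
  moreover have "tree_length P T2 s = tree_length P T0 s" unfolding L0 L2 eq by simp
  ultimately show ?thesis using m1 m2 le t1 t2 eq z by linarith
qed

end
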